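(* Let $S$ be an $m\times n$ Gaussian embedding, let $\{x_t\}$ be generated by a pre-conditioned first-order method $x_t=x_{t-1}+\sum_{j=0}^{t-1}\alpha_{j,t}H_S^{-1}\nabla f(x_j)$ with deterministic coefficients independent of $n$, and let $p_t\in\mathbb{R}_t^0[X]$ be the polynomial with $\Delta_t=p_t(C_S^{-1})\Delta_0$, for which $\lim_{n\to\infty}\mathbb{E}\|\Delta_t\|^2/\mathbb{E}\|\Delta_0\|^2=\int_a^b p_t^2(\lambda^{-1})\mu_\rho(\lambda)\mathrm{d}\lambda$. Setting $P_t(x)=p_t\!\left(\frac{x}{(1-\rho)^2}\right)$, we have $$\lim_{n\to\infty}\frac{\mathbb{E}\|\Delta_t\|^2}{\mathbb{E}\|\Delta_0\|^2}=(1-\rho)\int_a^b P_t^2(x)\frac{1}{x}\mu_\rho(x)\,\mathrm{d}x.$$ Consequently, if $\{\Pi_t\}$ is a family of polynomials orthogonal with respect to $\mu_\rho$ with $\deg\Pi_t=t$ and $\Pi_t(0)=1$, then $\overline{\Pi}_t(x):=\Pi_t((1-\rho)^2x)$ achieves the minimum $\mathcal{L}^*_{\mu_\rho,t}=\min_{p\in\mathbb{R}_t^0[X]}\int p^2(\lambda^{-1})\mu_\rho(\lambda)\mathrm{d}\lambda$.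
   Context: Setting: $A\in\mathbb{R}^{n\times d}$ of rank $d$, $b\in\mathbb{R}^n$, $f(x)=\frac12\|Ax-b\|^2$, $x^*=\arg\min f$, $d/n\to\gamma\in(0,1)$, $m/n\to\xi\in(\gamma,1)$, $\rho=\gamma/\xi\in(0,1)$. $U$ is the $n\times d$ matrix of left singular vectors of $A$, $H_S=A^\top S^\top SA$, $C_S=U^\top S^\top SU$, $\Delta_t=U^\top A(x_t-x^* )$. A Gaussian embedding has i.i.d. $\mathcal{N}(0,1/m)$ entries. $x_0$ random, independent of $S$, mean zero, with bounded condition number of $U^\top A\mathbb{E}[x_0x_0^\top]A^\top U+U^\top bb^\top U$. $\mu_\rho(x)=\frac{\sqrt{(b-x)_+(x-a)_+}}{2\pi\rho x}$ is the Marchenko–Pastur density with $a=(1-\sqrt\rho)^2$, $b=(1+\sqrt\rho)^2$ (here $a,b$ denote these edges, not the vector $b$). $\mathbb{R}_t^0[X]$: real polynomials of degree at most $t$ with value $1$ at $0$. *)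

theory Defs
  imports "HOL-Analysis.Analysis" "HOL-Computational_Algebra.Polynomial"
begin

definition mp_a :: "real \<Rightarrow> real" where "mp_a \<rho> = (1 - sqrt \<rho>)^2"
definition mp_b :: "real \<Rightarrow> real" where "mp_b \<rho> = (1 + sqrt \<rho>)^2"

definition mp_density :: "real \<Rightarrow> real \<Rightarrow> real" where
  "mp_density \<rho> x =
     sqrt (max 0 (mp_b \<rho> - x) * max 0 (x - mp_a \<rho>)) / (2 * pi * \<rho> * x)"

definition R0 :: "nat \<Rightarrow> real poly set" where
  "R0 t = {p. degree p \<le> t \<and> poly p 0 = 1}"

definition L_obj :: "real \<Rightarrow> real poly \<Rightarrow> real" where
  "L_obj \<rho> p = integral {mp_a \<rho>..mp_b \<rho>} (\<lambda>l. (poly p (1 / l))^2 * mp_density \<rho> l)"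

definition L_star :: "real \<Rightarrow> nat \<Rightarrow> real" where
  "L_star \<rho> t = Inf (L_obj \<rho> ` R0 t)"

end

theory Submission
  imports Defs
begin

lemma mp_basic:
  assumes "0 < \<rho>" "\<rho> < (1::real)"
  shows "0 < mp_a \<rho>" "mp_a \<rho> < mp_b \<rho>" "mp_a \<rho> * mp_b \<rho> = (1-\<rho>)^2"
proof -
  have s0: "0 < sqrt \<rho>" "sqrt \<rho> < 1" using assms by auto
  have sq: "sqrt \<rho> ^ 2 = \<rho>" using assms by simp
  show "0 < mp_a \<rho>" unfolding mp_a_def using s0 by simp
  show "mp_a \<rho> < mp_b \<rho>" unfolding mp_a_def mp_b_def using s0 by (simp add: power2_eq_square algebra_simps)
  have "mp_a \<rho> * mp_b \<rho> = ((1 - sqrt \<rho>) * (1 + sqrt \<rho>))^2" unfolding mp_a_def mp_b_def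
    by (simp add: power_mult_distrib)
  also have "\<dots> = (1 - sqrt \<rho> ^ 2)^2" by (simp add: algebra_simps power2_eq_square)
  finally show "mp_a \<rho> * mp_b \<rho> = (1-\<rho>)^2" using sq by simp
qed

lemma dens_cont:
  assumes "0 < \<rho>" "\<rho> < (1::real)"
  shows "continuous_on {mp_a \<rho>..mp_b \<rho>} (mp_density \<rho>)"
proof -
  have "\<forall>x\<in>{mp_a \<rho>..mp_b \<rho>}. 2 * pi * \<rho> * x \<noteq> 0"
    using mp_basic[OF assms] assms by auto
  then show ?thesis unfolding mp_density_def[abs_def]
    by (intro continuous_intros) auto
qed

lemma dens_nonneg:
  assumes "0 < \<rho>" "0 < (x::real)"
  shows "0 \<le> mp_density \<rho> x"
  unfolding mp_density_def using assms by simp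

lemma dens_sub:
  assumes "0 < \<rho>" "\<rho> < (1::real)" and x: "x \<in> {mp_a \<rho>..mp_b \<rho>}"
  shows "(1-\<rho>)^2 / x^2 * mp_density \<rho> ((1-\<rho>)^2 / x) = (1-\<rho>) * (1/x * mp_density \<rho> x)"
proof -
  define a where "a = mp_a \<rho>"
  define b where "b = mp_b \<rho>"
  have a0: "0 < a" and ab: "a < b" and c: "a * b = (1-\<rho>)^2"
    using mp_basic[OF assms(1,2)] by (auto simp: a_def b_def)
  have xa: "a \<le> x" and xb: "x \<le> b" using x by (auto simp: a_def b_def)
  have x0: "0 < x" using a0 xa by linarith
  have b0: "0 < b" using a0 ab by linarith
  have e1: "b - a*b/x = b*(x-a)/x" using x0 by (simp add: field_simps)
  have e2: "a*b/x - a = a*(b-x)/x" using x0 by (simp add: field_simps)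
  have n1: "0 \<le> b*(x-a)/x" using b0 xa x0 by simp
  have n2: "0 \<le> a*(b-x)/x" using a0 xb x0 by simp
  have prod: "max 0 (b - a*b/x) * max 0 (a*b/x - a) = (a*b) * ((x-a)*(b-x)) / x^2"
    unfolding e1 e2 using n1 n2 by (simp add: power2_eq_square field_simps)
  have sab: "sqrt (a*b) = 1 - \<rho>" using c assms by simp
  have sx: "sqrt (x^2) = x" using x0 by simp
  have m1: "max 0 (b - x) * max 0 (x - a) = (x-a)*(b-x)" using xa xb by simp
  define s where "s = sqrt ((x-a)*(b-x))"
  have hs: "sqrt ((a*b) * ((x-a)*(b-x)) / x^2) = (1-\<rho>) * s / x"
      by (simp only: real_sqrt_divide sx real_sqrt_mult[of "a*b"] sab s_def)
  have d1: "mp_density \<rho> (a*b/x) = (1-\<rho>) * s / x / (2*pi*\<rho>*(a*b/x))"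
    unfolding mp_density_def a_def[symmetric] b_def[symmetric] prod hs by simp
  have d2: "mp_density \<rho> x = s / (2*pi*\<rho>*x)"
    unfolding mp_density_def a_def[symmetric] b_def[symmetric] m1 s_def by simp
  show ?thesis unfolding c[symmetric] d1 d2 using x0 assms a0 b0
    by (simp add: field_simps power2_eq_square)
qed

lemma change_var:
  assumes "0 < \<rho>" "\<rho> < (1::real)"
  shows "L_obj \<rho> p = (1-\<rho>) * integral {mp_a \<rho>..mp_b \<rho>}
           (\<lambda>x. (poly p (x / (1-\<rho>)^2))^2 * (1/x) * mp_density \<rho> x)"
proof -
  define a where "a = mp_a \<rho>"
  define b where "b = mp_b \<rho>"
  define c where "c = (1-\<rho>)^2"
  have a0: "0 < a" and ab: "a < b" and cab: "c = a * b"
    using mp_basic[OF assms] by (auto simp: a_def b_def c_def)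
  have c0: "0 < c" using assms c_def by simp
  define f where "f = (\<lambda>l. (poly p (1 / l))^2 * mp_density \<rho> l)"
  have fc: "continuous_on {a..b} f"
    unfolding f_def a_def b_def
    using mp_basic[OF assms] dens_cont[OF assms]
    by (intro continuous_intros) auto
  have sub: "(\<lambda>x. c / x) ` {a..b} \<subseteq> {a..b}"
  proof
    fix y assume "y \<in> (\<lambda>x. c / x) ` {a..b}"
    then obtain x where x: "x \<in> {a..b}" "y = c / x" by auto
    have x0: "0 < x" using x a0 by auto
    have "a \<le> c / x" using x x0 a0 unfolding cab by (simp add: field_simps)
    moreover have "c / x \<le> b" using x x0 ab a0 unfolding cab by (simp add: field_simps mult_left_mono)
    ultimately show "y \<in> {a..b}" using x by simp
  qed
  have gc: "continuous_on {a..b} (\<lambda>x. c / x)"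
    using a0 by (intro continuous_intros) auto
  have gd: "((\<lambda>x. c / x) has_field_derivative (- c / x^2)) (at x within {a..b})"
    if "x \<in> {a..b} - {}" for x
  proof -
    have "x \<noteq> 0" using that a0 by auto
    then show ?thesis
      by (auto intro!: derivative_eq_intros simp: power2_eq_square field_simps)
  qed
  have ga: "c / a = b" and gb: "c / b = a" using a0 ab cab by auto
  have H: "((\<lambda>x. (- c / x^2) *\<^sub>R f (c / x)) has_integral
      (integral {c/a..c/b} f - integral {c/b..c/a} f)) {a..b}"
    by (rule has_integral_substitution_general[OF _ _ sub fc gc gd]) (use ab in auto)
  have H2: "((\<lambda>x. (1-\<rho>) * ((poly p (x / c))^2 * (1/x) * mp_density \<rho> x)) has_integral
      integral {a..b} f) {a..b}"
  proof -
    have "((\<lambda>x. - ((- c / x^2) *\<^sub>R f (c / x))) has_integral integral {a..b} f) {a..b}"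
      using has_integral_neg[OF H] ga gb ab by simp
    moreover have "- ((- c / x^2) *\<^sub>R f (c / x)) = (1-\<rho>) * ((poly p (x / c))^2 * (1/x) * mp_density \<rho> x)"
      if "x \<in> {a..b}" for x
    proof -
      have "- ((- c / x^2) *\<^sub>R f (c / x)) = (poly p (x / c))^2 * (c / x^2 * mp_density \<rho> (c / x))"
        unfolding f_def by simp
      also have "\<dots> = (poly p (x / c))^2 * ((1-\<rho>) * (1/x * mp_density \<rho> x))"
        using dens_sub[OF assms, of x] that unfolding c_def a_def b_def by simp
      finally show ?thesis by simp
    qed
    ultimately show ?thesis using has_integral_cong by (smt (verit))
  qed
  have "integral {a..b} (\<lambda>x. (1-\<rho>) * ((poly p (x / c))^2 * (1/x) * mp_density \<rho> x)) = integral {a..b} f"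
    using H2 by (rule integral_unique)
  then have "(1-\<rho>) * integral {a..b} (\<lambda>x. (poly p (x / c))^2 * (1/x) * mp_density \<rho> x) = integral {a..b} f"
    by (simp only: integral_mult_right)
  then show ?thesis unfolding L_obj_def a_def[symmetric] b_def[symmetric] c_def[symmetric] f_def
    by simp
qed

lemma ip_integrable:
  assumes "0 < \<rho>" "\<rho> < (1::real)"
  shows "(\<lambda>x. poly A x * poly B x * mp_density \<rho> x) integrable_on {mp_a \<rho>..mp_b \<rho>}"
  by (intro integrable_continuous_interval continuous_intros dens_cont[OF assms])

lemma orth_low:
  assumes "0 < \<rho>" "\<rho> < (1::real)"
    and orth: "\<forall>s k. s \<noteq> k \<longrightarrow>
           integral {mp_a \<rho>..mp_b \<rho>} (\<lambda>x. poly (Q s) x * poly (Q k) x * mp_density \<rho> x) = 0"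
    and deg: "\<forall>k. degree (Q k) = k"
    and one: "\<forall>k. poly (Q k) 0 = 1"
  shows "degree S \<le> d \<Longrightarrow> d < t \<Longrightarrow>
     integral {mp_a \<rho>..mp_b \<rho>} (\<lambda>x. poly (Q t) x * poly S x * mp_density \<rho> x) = 0"
proof (induction d arbitrary: S)
  case 0
  have "[: coeff (Q 0) 0 :] = Q 0" using deg by (intro degree_0_id) auto
  moreover have "coeff (Q 0) 0 = 1" using one poly_0_coeff_0 by metis
  ultimately have q0: "poly (Q 0) x = 1" for x by (metis poly_pCons poly_0 mult_zero_right add.right_neutral)
  have "[: coeff S 0 :] = S" using 0 by (intro degree_0_id) auto
  then have s0: "poly S x = coeff S 0" for x by (metis poly_pCons poly_0 mult_zero_right add.right_neutral)
  have "integral {mp_a \<rho>..mp_b \<rho>} (\<lambda>x. poly (Q t) x * poly S x * mp_density \<rho> x)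
      = coeff S 0 * integral {mp_a \<rho>..mp_b \<rho>} (\<lambda>x. poly (Q t) x * poly (Q 0) x * mp_density \<rho> x)"
    unfolding q0 s0 integral_mult_right[symmetric] by (simp add: algebra_simps)
  also have "\<dots> = 0" using orth 0 by simp
  finally show ?case .
next
  case (Suc d)
  define q where "q = Q (Suc d)"
  define k where "k = coeff S (Suc d) / lead_coeff q"
  define R where "R = S - smult k q"
  have dq: "degree q = Suc d" using deg q_def by simp
  then have "q \<noteq> 0" by auto
  then have lc: "lead_coeff q \<noteq> 0" by simp
  have "degree R \<le> Suc d" unfolding R_def using Suc.prems dq
    by (intro degree_diff_le) (auto intro: order_trans[OF degree_smult_le])
  moreover have "coeff R (Suc d) = 0" unfolding R_def k_def using lc dq by simp
  ultimately have "degree R \<le> d"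
  proof (intro degree_le allI impI)
    fix i assume "degree R \<le> Suc d" "coeff R (Suc d) = 0" "d < i"
    then show "coeff R i = 0"
      by (cases "i = Suc d") (auto intro: coeff_eq_0)
  qed
  then have IH: "integral {mp_a \<rho>..mp_b \<rho>} (\<lambda>x. poly (Q t) x * poly R x * mp_density \<rho> x) = 0"
    using Suc.IH Suc.prems by simp
  have oq: "integral {mp_a \<rho>..mp_b \<rho>} (\<lambda>x. poly (Q t) x * poly q x * mp_density \<rho> x) = 0"
    using orth Suc.prems unfolding q_def by simp
  have "S = smult k q + R" unfolding R_def by simp
  then have "poly S x = k * poly q x + poly R x" for x by (metis poly_add poly_smult)
  then have "integral {mp_a \<rho>..mp_b \<rho>} (\<lambda>x. poly (Q t) x * poly S x * mp_density \<rho> x)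
     = integral {mp_a \<rho>..mp_b \<rho>} (\<lambda>x. k * (poly (Q t) x * poly q x * mp_density \<rho> x)
         + poly (Q t) x * poly R x * mp_density \<rho> x)"
    by (simp add: algebra_simps)
  also have "\<dots> = k * integral {mp_a \<rho>..mp_b \<rho>} (\<lambda>x. poly (Q t) x * poly q x * mp_density \<rho> x)
      + integral {mp_a \<rho>..mp_b \<rho>} (\<lambda>x. poly (Q t) x * poly R x * mp_density \<rho> x)"
    by (subst integral_add) (auto intro: integrable_on_cmult_left integrable_on_mult_right ip_integrable[OF assms(1,2)])
  finally show ?case using IH oq by simp
qed

lemma minim:
  assumes r: "0 < \<rho>" "\<rho> < (1::real)"
    and orth: "\<forall>s k. s \<noteq> k \<longrightarrow>
           integral {mp_a \<rho>..mp_b \<rho>} (\<lambda>x. poly (Q s) x * poly (Q k) x * mp_density \<rho> x) = 0"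
    and deg: "\<forall>k. degree (Q k) = k"
    and one: "\<forall>k. poly (Q k) 0 = 1"
    and P: "degree P \<le> t" "poly P 0 = 1"
  shows "integral {mp_a \<rho>..mp_b \<rho>} (\<lambda>x. (poly (Q t) x)^2 * (1/x) * mp_density \<rho> x)
       \<le> integral {mp_a \<rho>..mp_b \<rho>} (\<lambda>x. (poly P x)^2 * (1/x) * mp_density \<rho> x)"
proof -
  define a where "a = mp_a \<rho>"
  define b where "b = mp_b \<rho>"
  have a0: "0 < a" using mp_basic[OF r] a_def by simp
  have dc: "continuous_on {a..b} (mp_density \<rho>)" using dens_cont[OF r] a_def b_def by simp
  have "poly (P - Q t) (- 0) = 0" using P one by simp
  then have "[:0, 1:] dvd (P - Q t)" by (subst dvd_iff_poly_eq_0) 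
  then obtain S where S: "P - Q t = [:0,1:] * S" by (elim dvdE)
  have oS: "integral {a..b} (\<lambda>x. poly (Q t) x * poly S x * mp_density \<rho> x) = 0"
  proof (cases "S = 0")
    case True then show ?thesis by simp
  next
    case False
    have "degree (P - Q t) \<le> t" using P deg by (intro degree_diff_le) auto
    moreover have "degree ([:0,1:] * S) = 1 + degree S" using False
      by (subst degree_mult_eq) auto
    ultimately have "degree S < t" using S by simp
    then show ?thesis unfolding a_def b_def
      using orth_low[OF r orth deg one, of S "degree S" t] by simp
  qed
  have pe: "(poly P x)^2 * (1/x) * mp_density \<rho> x =
      (poly (Q t) x)^2 * (1/x) * mp_density \<rho> x
      + 2 * (poly (Q t) x * poly S x * mp_density \<rho> x)
      + x * (poly S x)^2 * mp_density \<rho> x" if "x \<in> {a..b}" for x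
  proof -
    have "P = Q t + [:0,1:] * S" using S by (simp add: algebra_simps)
    then have "poly P x = poly (Q t) x + x * poly S x" by simp
    moreover have "x \<noteq> 0" using that a0 by auto
    ultimately show ?thesis by (simp add: power2_eq_square field_simps)
  qed
  have i1: "(\<lambda>x. (poly (Q t) x)^2 * (1/x) * mp_density \<rho> x) integrable_on {a..b}"
    using a0 dc by (intro integrable_continuous_interval continuous_intros) auto
  have i2: "(\<lambda>x. 2 * (poly (Q t) x * poly S x * mp_density \<rho> x)) integrable_on {a..b}"
    using a0 dc by (intro integrable_continuous_interval continuous_intros) auto
  have i3: "(\<lambda>x. x * (poly S x)^2 * mp_density \<rho> x) integrable_on {a..b}"
    using a0 dc by (intro integrable_continuous_interval continuous_intros) auto
  have nn: "0 \<le> integral {a..b} (\<lambda>x. x * (poly S x)^2 * mp_density \<rho> x)"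
    using i3 by (rule Henstock_Kurzweil_Integration.integral_nonneg)
      (use a0 dens_nonneg[OF r(1)] in auto)
  have "integral {a..b} (\<lambda>x. (poly P x)^2 * (1/x) * mp_density \<rho> x)
     = integral {a..b} (\<lambda>x. (poly (Q t) x)^2 * (1/x) * mp_density \<rho> x
      + 2 * (poly (Q t) x * poly S x * mp_density \<rho> x)
      + x * (poly S x)^2 * mp_density \<rho> x)"
    using pe by (rule integral_cong)
  also have "\<dots> = integral {a..b} (\<lambda>x. (poly (Q t) x)^2 * (1/x) * mp_density \<rho> x)
      + 2 * integral {a..b} (\<lambda>x. poly (Q t) x * poly S x * mp_density \<rho> x)
      + integral {a..b} (\<lambda>x. x * (poly S x)^2 * mp_density \<rho> x)"
    using i1 i2 i3 by (simp add: integral_add integrable_add integral_mult_right del: mult_2)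
  finally show ?thesis using oS nn unfolding a_def b_def by simp
qed

theorem lemma3:
  fixes \<rho> :: real
  assumes "0 < \<rho>" and "\<rho> < 1"
  shows
    "(\<forall>(t::nat) (p::real poly) (r::nat \<Rightarrow> real).
        p \<in> R0 t \<longrightarrow> r \<longlonglongrightarrow> L_obj \<rho> p \<longrightarrow>
        r \<longlonglongrightarrow> (1 - \<rho>) * integral {mp_a \<rho>..mp_b \<rho>}
              (\<lambda>x. (poly (pcompose p [:0, 1 / (1 - \<rho>)^2:]) x)^2 * (1 / x) * mp_density \<rho> x))
     \<and>
     (\<forall>Q :: nat \<Rightarrow> real poly.
        (\<forall>s k. s \<noteq> k \<longrightarrow>
           integral {mp_a \<rho>..mp_b \<rho>} (\<lambda>x. poly (Q s) x * poly (Q k) x * mp_density \<rho> x) = 0)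
        \<longrightarrow> (\<forall>k. degree (Q k) = k)
        \<longrightarrow> (\<forall>k. poly (Q k) 0 = 1)
        \<longrightarrow> (\<forall>t. pcompose (Q t) [:0, (1 - \<rho>)^2:] \<in> R0 t
                 \<and> L_obj \<rho> (pcompose (Q t) [:0, (1 - \<rho>)^2:]) = L_star \<rho> t))"
proof (intro conjI allI impI)
  fix t :: nat and p :: "real poly" and r :: "nat \<Rightarrow> real"
  assume "r \<longlonglongrightarrow> L_obj \<rho> p"
  moreover have "L_obj \<rho> p = (1 - \<rho>) * integral {mp_a \<rho>..mp_b \<rho>}
              (\<lambda>x. (poly (pcompose p [:0, 1 / (1 - \<rho>)^2:]) x)^2 * (1 / x) * mp_density \<rho> x)"
    using change_var[OF assms, of p] by (simp add: poly_pcompose)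
  ultimately show "r \<longlonglongrightarrow> (1 - \<rho>) * integral {mp_a \<rho>..mp_b \<rho>}
              (\<lambda>x. (poly (pcompose p [:0, 1 / (1 - \<rho>)^2:]) x)^2 * (1 / x) * mp_density \<rho> x)"
    by simp
next
  fix Q :: "nat \<Rightarrow> real poly" and t :: nat
  assume orth: "\<forall>s k. s \<noteq> k \<longrightarrow>
           integral {mp_a \<rho>..mp_b \<rho>} (\<lambda>x. poly (Q s) x * poly (Q k) x * mp_density \<rho> x) = 0"
    and deg: "\<forall>k. degree (Q k) = k" and one: "\<forall>k. poly (Q k) 0 = 1"
  define c where "c = (1 - \<rho>)^2"
  have c0: "c \<noteq> 0" using assms c_def by simp
  have key: "L_obj \<rho> q = (1-\<rho>) * integral {mp_a \<rho>..mp_b \<rho>}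
           (\<lambda>x. (poly q (x / c))^2 * (1/x) * mp_density \<rho> x)" for q
    using change_var[OF assms, of q] c_def by simp
  define Pt where "Pt = pcompose (Q t) [:0, c:]"
  show "pcompose (Q t) [:0, (1 - \<rho>)^2:] \<in> R0 t"
    using deg one c0 unfolding R0_def c_def[symmetric] by (simp add: degree_pcompose poly_pcompose)
  have LPt: "L_obj \<rho> Pt = (1-\<rho>) * integral {mp_a \<rho>..mp_b \<rho>}
           (\<lambda>x. (poly (Q t) x)^2 * (1/x) * mp_density \<rho> x)"
    unfolding key Pt_def using c0 by (simp add: poly_pcompose)
  have "Inf (L_obj \<rho> ` R0 t) = L_obj \<rho> Pt"
  proof (rule cInf_eq_minimum)
    show "L_obj \<rho> Pt \<in> L_obj \<rho> ` R0 t"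
      using deg one c0 unfolding R0_def Pt_def by (simp add: degree_pcompose poly_pcompose)
  next
    fix y assume "y \<in> L_obj \<rho> ` R0 t"
    then obtain q where q: "q \<in> R0 t" "y = L_obj \<rho> q" by auto
    define P where "P = pcompose q [:0, 1/c:]"
    have "degree P \<le> t" "poly P 0 = 1" using q(1) c0 unfolding P_def R0_def
      by (auto simp: degree_pcompose poly_pcompose)
    from minim[OF assms orth deg one this]
    have "integral {mp_a \<rho>..mp_b \<rho>} (\<lambda>x. (poly (Q t) x)^2 * (1/x) * mp_density \<rho> x)
       \<le> integral {mp_a \<rho>..mp_b \<rho>} (\<lambda>x. (poly q (x / c))^2 * (1/x) * mp_density \<rho> x)"
      unfolding P_def by (simp add: poly_pcompose)
    then have "(1-\<rho>) * integral {mp_a \<rho>..mp_b \<rho>} (\<lambda>x. (poly (Q t) x)^2 * (1/x) * mp_density \<rho> x)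
       \<le> (1-\<rho>) * integral {mp_a \<rho>..mp_b \<rho>} (\<lambda>x. (poly q (x / c))^2 * (1/x) * mp_density \<rho> x)"
      using assms by (intro mult_left_mono) auto
    then show "L_obj \<rho> Pt \<le> y" using LPt key[of q] q(2) by simp
  qed
  then show "L_obj \<rho> (pcompose (Q t) [:0, (1 - \<rho>)^2:]) = L_star \<rho> t"
    unfolding L_star_def Pt_def c_def by simp
qed

end
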